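(* Assume H1 and H2. Then for any $\kappa>0$, $\theta\in\Theta$, $\bar\gamma<2/(\mathtt{m}+L)$, $\gamma\in(0,\bar\gamma]$ and $x\in\mathbb{R}^d$, $$\|\mathrm{prox}^{\gamma\kappa}_{U_\theta}(x)-\gamma\nabla V_\theta(\mathrm{prox}^{\gamma\kappa}_{U_\theta}(x))\|^2\le(1-\gamma\varpi/2)\|x\|^2+\gamma\big[\bar\gamma\kappa^2M^2+\{(2/(\mathtt{m}+L)-\bar\gamma)^{-1}+4\varpi\}R_{V,1}^2+2\kappa^2M^2\varpi^{-1}\big],$$ with $\varpi=\mathtt{m}L/(\mathtt{m}+L)$.
   Context: $\|\cdot\|$ Euclidean, $\Theta\subset\mathbb{R}^{d_\Theta}$ nonempty. $\mathrm{prox}^\lambda_U(x)=\arg\min_{\tilde x}\{U(\tilde x)+\|x-\tilde x\|^2/(2\lambda)\}$. $\mathtt{m}$-convex: $V(tx+(1-t)y)\le tV(x)+(1-t)V(y)-(\mathtt{m}/2)t(1-t)\|x-y\|^2$. H1: for every $\theta\in\Theta$ convex $V_\theta,\bar V_\theta,U_\theta,\bar U_\theta:\mathbb{R}^d\to[0,\infty)$ with (a) $e^{-V_\theta-U_\theta}$, $e^{-\bar V_\theta-\bar U_\theta}$ integrable with $\min(\inf_\theta\int e^{-V_\theta-U_\theta},\inf_\theta\int e^{-\bar V_\theta-\bar U_\theta})>0$; (b) $V_\theta,\bar V_\theta$ $C^1$ with $L$-Lipschitz gradients ($L$ independent of $\theta$), and for each $\theta$ minimizers $x^*_\theta$ of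 $V_\theta$, $\bar x^*_\theta$ of $\bar V_\theta$ with norm $\le R_{V,1}$ and minimum values of absolute value $\le R_{V,2}$; (c) $U_\theta,\bar U_\theta$ are $M$-Lipschitz, with points of norm $\le R_{U,1}$ where $|U_\theta|,|\bar U_\theta|\le R_{U,2}$. H2: there is $\mathtt{m}>0$ such that $V_\theta,\bar V_\theta$ are $\mathtt{m}$-convex for all $\theta$. *)

theory Defs
  imports "HOL-Analysis.Analysis"
begin

definition prox :: "real \<Rightarrow> ('a::euclidean_space \<Rightarrow> real) \<Rightarrow> 'a \<Rightarrow> 'a" where
  "prox lam U x = (THE y. \<forall>z. U y + (norm (x - y))\<^sup>2 / (2 * lam) \<le> U z + (norm (x - z))\<^sup>2 / (2 * lam))"

definition m_convex :: "real \<Rightarrow> ('a::euclidean_space \<Rightarrow> real) \<Rightarrow> bool" where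
  "m_convex m V \<longleftrightarrow> (\<forall>x y t. 0 \<le> t \<longrightarrow> t \<le> 1 \<longrightarrow>
     V (t *\<^sub>R x + (1 - t) *\<^sub>R y) \<le> t * V x + (1 - t) * V y - (m / 2) * t * (1 - t) * (norm (x - y))\<^sup>2)"

end

theory Submission
  imports Defs
begin

lemma descent:
  fixes f :: "'a::real_inner \<Rightarrow> real" and g :: "'a \<Rightarrow> 'a"
  assumes der: "\<And>x. (f has_derivative (\<lambda>h. g x \<bullet> h)) (at x)"
    and lip: "\<And>x y. norm (g x - g y) \<le> L * norm (x - y)"
  shows "f z \<le> f y + g y \<bullet> (z - y) + L / 2 * (norm (z - y))\<^sup>2"
proof -
  define d where "d = z - y"
  define \<psi> where "\<psi> t = f (y + t *\<^sub>R d) - t * (g y \<bullet> d) - L/2 * t^2 * (norm d)^2" for t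
  have D1: "((\<lambda>t. f (y + t *\<^sub>R d)) has_real_derivative (g (y + t *\<^sub>R d) \<bullet> d)) (at t)" for t
  proof -
    have "((\<lambda>t. y + t *\<^sub>R d) has_derivative (\<lambda>s. s *\<^sub>R d)) (at t)"
      by (auto intro!: derivative_eq_intros)
    from has_derivative_compose[OF this der]
    have "((\<lambda>t. f (y + t *\<^sub>R d)) has_derivative (\<lambda>s. g (y + t *\<^sub>R d) \<bullet> (s *\<^sub>R d))) (at t)" .
    moreover have "(\<lambda>s. g (y + t *\<^sub>R d) \<bullet> (s *\<^sub>R d)) = (*) (g (y + t *\<^sub>R d) \<bullet> d)"
      by (auto simp: fun_eq_iff)
    ultimately show ?thesis by (simp add: has_field_derivative_def)
  qed
  have D: "(\<psi> has_real_derivative (g (y + t *\<^sub>R d) \<bullet> d - g y \<bullet> d - L * t * (norm d)^2)) (at t)" for t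
    unfolding \<psi>_def
    by (rule derivative_eq_intros D1 refl | simp)+
  obtain \<xi> where \<xi>: "0 < \<xi>" "\<xi> < 1" and eq: "\<psi> 1 - \<psi> 0 = (1 - 0) * (g (y + \<xi> *\<^sub>R d) \<bullet> d - g y \<bullet> d - L * \<xi> * (norm d)^2)"
    using MVT2[of 0 1 \<psi>, OF _ D] by auto
  have "g (y + \<xi> *\<^sub>R d) \<bullet> d - g y \<bullet> d = (g (y + \<xi> *\<^sub>R d) - g y) \<bullet> d"
    by (simp add: inner_diff_left)
  also have "\<dots> \<le> norm (g (y + \<xi> *\<^sub>R d) - g y) * norm d"
    by (rule norm_cauchy_schwarz)
  also have "\<dots> \<le> L * norm (\<xi> *\<^sub>R d) * norm d"
    using lip[of "y + \<xi> *\<^sub>R d" y] by (simp add: mult_right_mono)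
  also have "\<dots> = L * \<xi> * (norm d)^2"
    using \<xi> by (simp add: power2_eq_square)
  finally have "\<psi> 1 - \<psi> 0 \<le> 0" using eq by simp
  then show ?thesis unfolding \<psi>_def d_def by simp
qed

lemma strong_grad:
  fixes f :: "'a::euclidean_space \<Rightarrow> real" and g :: "'a \<Rightarrow> 'a"
  assumes der: "\<And>x. (f has_derivative (\<lambda>h. g x \<bullet> h)) (at x)"
    and mc: "m_convex m f"
  shows "f y + g y \<bullet> (z - y) + m / 2 * (norm (z - y))\<^sup>2 \<le> f z"
proof -
  define d where "d = z - y"
  define \<phi> where "\<phi> t = f (y + t *\<^sub>R d)" for t
  have D1: "(\<phi> has_real_derivative (g y \<bullet> d)) (at 0)"
  proof -
    have "((\<lambda>t. y + t *\<^sub>R d) has_derivative (\<lambda>s. s *\<^sub>R d)) (at 0)"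
      by (auto intro!: derivative_eq_intros)
    from has_derivative_compose[OF this der]
    have "(\<phi> has_derivative (\<lambda>s. g y \<bullet> (s *\<^sub>R d))) (at 0)" by (simp add: \<phi>_def[abs_def])
    moreover have "(\<lambda>s. g y \<bullet> (s *\<^sub>R d)) = (*) (g y \<bullet> d)"
      by (auto simp: fun_eq_iff)
    ultimately show ?thesis by (simp add: has_field_derivative_def)
  qed
  then have "(\<phi> has_real_derivative (g y \<bullet> d)) (at 0 within {0<..})"
    by (rule has_field_derivative_at_within)
  then have lim: "((\<lambda>t. (\<phi> t - \<phi> 0) / (t - 0)) \<longlongrightarrow> g y \<bullet> d) (at_right 0)"
    by (simp add: has_field_derivative_iff)
  have lim2: "((\<lambda>t. f z - f y - m/2 * (1 - t) * (norm d)^2) \<longlongrightarrow> f z - f y - m/2 * (1 - 0) * (norm d)^2) (at_right 0)"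
    by (intro tendsto_intros)
  have ev: "eventually (\<lambda>t. (\<phi> t - \<phi> 0) / (t - 0) \<le> f z - f y - m/2 * (1 - t) * (norm d)^2) (at_right (0::real))"
  proof -
    have "eventually (\<lambda>t::real. t \<in> {0<..<1}) (at_right 0)"
      by (rule eventually_at_right_real) simp
    then show ?thesis
    proof eventually_elim
      case (elim t)
      have "f (t *\<^sub>R z + (1 - t) *\<^sub>R y) \<le> t * f z + (1 - t) * f y - (m / 2) * t * (1 - t) * (norm (z - y))\<^sup>2"
        using mc elim unfolding m_convex_def by simp
      moreover have "t *\<^sub>R z + (1 - t) *\<^sub>R y = y + t *\<^sub>R d"
        by (simp add: d_def algebra_simps)
      ultimately have "\<phi> t - \<phi> 0 \<le> t * (f z - f y - m/2 * (1 - t) * (norm d)^2)"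
        by (simp add: \<phi>_def d_def algebra_simps)
      then show ?case using elim by (simp add: divide_le_eq mult.commute)
    qed
  qed
  have "g y \<bullet> d \<le> f z - f y - m/2 * (1 - 0) * (norm d)^2"
    by (rule tendsto_le[OF _ lim2 lim ev]) simp
  then show ?thesis by (simp add: d_def)
qed


lemma real_coco:
  fixes n a \<beta> :: real
  assumes all: "\<And>t. (2*t - \<beta>*t^2) * n \<le> a" and n: "n \<ge> 0" and z: "n = 0 \<Longrightarrow> a = 0"
  shows "n \<le> \<beta> * a"
proof (cases "n = 0")
  case True then show ?thesis using z by simp
next
  case False
  then have np: "n > 0" using n by simp
  show ?thesis
  proof (cases "\<beta> > 0")
    case True
    have "(2*(1/\<beta>) - \<beta>*(1/\<beta>)^2) * n \<le> a" by (rule all)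
    moreover have "(2*(1/\<beta>) - \<beta>*(1/\<beta>)^2) * n = n / \<beta>" using True
      by (simp add: power2_eq_square field_simps)
    ultimately have "n / \<beta> \<le> a" by simp
    then show ?thesis using True by (simp add: divide_le_eq mult.commute)
  next
    case False
    define t where "t = (\<bar>a\<bar> + 1) / n"
    have t0: "t \<ge> 0" using np by (simp add: t_def)
    have "(2*t - \<beta>*t^2) * n \<le> a" by (rule all)
    moreover have "2*t*n \<le> (2*t - \<beta>*t^2) * n"
      using False np t0 by (intro mult_right_mono) (auto simp: mult_nonpos_nonneg)
    moreover have "2*t*n = 2*(\<bar>a\<bar>+1)" using np by (simp add: t_def)
    ultimately have "2*(\<bar>a\<bar>+1) \<le> a" by linarith
    then show ?thesis by (cases "a \<ge> 0") auto
  qed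
qed

lemma cocoercive:
  fixes \<phi> :: "'a::real_inner \<Rightarrow> real" and G :: "'a \<Rightarrow> 'a"
  assumes low: "\<And>y z. \<phi> y + G y \<bullet> (z - y) \<le> \<phi> z"
    and up: "\<And>y z. \<phi> z \<le> \<phi> y + G y \<bullet> (z - y) + \<beta>/2 * (norm (z - y))^2"
  shows "(norm (G x - G y))^2 \<le> \<beta> * ((G x - G y) \<bullet> (x - y))"
proof -
  have key: "\<phi> a - G a \<bullet> a \<le> \<phi> b - G a \<bullet> b - t * (norm (G b - G a))^2 + \<beta>/2 * t^2 * (norm (G b - G a))^2"
    for a b t
  proof -
    define h where "h = G b - G a"
    define w where "w = b - t *\<^sub>R h"
    have 1: "\<phi> a + G a \<bullet> (w - a) \<le> \<phi> w" by (rule low)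
    have 2: "\<phi> w \<le> \<phi> b + G b \<bullet> (w - b) + \<beta>/2 * (norm (w - b))^2" by (rule up)
    have 3: "(norm (w - b))^2 = t^2 * (norm h)^2" by (simp add: w_def power_mult_distrib)
    have 4: "G a \<bullet> (w - a) = G a \<bullet> b - t * (G a \<bullet> h) - G a \<bullet> a"
      by (simp add: w_def inner_diff_right)
    have 5: "G b \<bullet> (w - b) = - t * (G b \<bullet> h)" by (simp add: w_def)
    have 6: "G b \<bullet> h - G a \<bullet> h = (norm h)^2"
      by (simp add: h_def power2_norm_eq_inner inner_diff_left)
    show ?thesis using 1 2 3 4 5 6 unfolding h_def[symmetric]
      by (simp add: algebra_simps)
  qed
  have all: "(2*t - \<beta>*t^2) * (norm (G x - G y))^2 \<le> (G x - G y) \<bullet> (x - y)" for t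
  proof -
    have a: "\<phi> x - G x \<bullet> x \<le> \<phi> y - G x \<bullet> y - t * (norm (G y - G x))^2 + \<beta>/2 * t^2 * (norm (G y - G x))^2"
      by (rule key)
    have b: "\<phi> y - G y \<bullet> y \<le> \<phi> x - G y \<bullet> x - t * (norm (G x - G y))^2 + \<beta>/2 * t^2 * (norm (G x - G y))^2"
      by (rule key)
    have c: "norm (G y - G x) = norm (G x - G y)" by (rule norm_minus_commute)
    have d: "(G x - G y) \<bullet> (x - y) = G x \<bullet> x - G x \<bullet> y - G y \<bullet> x + G y \<bullet> y"
      by (simp add: inner_diff_left inner_diff_right)
    show ?thesis using a b c d by (simp add: algebra_simps)
  qed
  show ?thesis
    by (rule real_coco[OF all]) auto
qed


lemma para:
  fixes a b :: "'a::real_inner"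
  shows "(norm ((1/2) *\<^sub>R a + (1/2) *\<^sub>R b))^2 = ((norm a)^2 + (norm b)^2) / 2 - (norm (b - a))^2 / 4"
  by (simp add: power2_norm_eq_inner inner_add_left inner_add_right inner_diff_left inner_diff_right inner_commute[of b a] field_simps)

lemma prox_min:
  fixes U :: "'a::euclidean_space \<Rightarrow> real"
  assumes lam: "lam > 0" and cvx: "convex_on UNIV U" and nn: "\<And>x. 0 \<le> U x"
    and lip: "M-lipschitz_on UNIV U"
  shows "\<forall>z. U (prox lam U x) + (norm (x - prox lam U x))\<^sup>2 / (2 * lam) \<le> U z + (norm (x - z))\<^sup>2 / (2 * lam)"
proof -
  define F where "F z = U z + (norm (x - z))\<^sup>2 / (2 * lam)" for z
  define r where "r = sqrt (2 * lam * (U x + 1))"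
  have contU: "continuous_on UNIV U" by (rule lipschitz_on_continuous_on[OF lip])
  have contF: "continuous_on (cball x r) F"
    unfolding F_def
    using lam by (intro continuous_intros continuous_on_subset[OF contU]) auto
  have "r \<ge> 0" using lam nn[of x] by (simp add: r_def)
  then have "cball x r \<noteq> {}" by simp
  then obtain p where pK: "p \<in> cball x r" and pmin: "\<And>y. y \<in> cball x r \<Longrightarrow> F p \<le> F y"
    using continuous_attains_inf[OF compact_cball _ contF] by blast
  have ex: "\<forall>z. F p \<le> F z"
  proof
    fix z
    show "F p \<le> F z"
    proof (cases "z \<in> cball x r")
      case True then show ?thesis by (rule pmin)
    next
      case False
      then have "r < norm (x - z)" by (simp add: dist_norm)
      then have "r^2 < (norm (x - z))^2"
        using \<open>r \<ge> 0\<close> by (intro power_strict_mono) auto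
      moreover have "r^2 = 2 * lam * (U x + 1)" unfolding r_def
        using lam nn[of x] by simp
      ultimately have "U x + 1 < (norm (x - z))\<^sup>2 / (2 * lam)"
        using lam by (simp add: field_simps)
      moreover have "F p \<le> F x" using pmin[of x] \<open>r \<ge> 0\<close> by simp
      moreover have "F x = U x" by (simp add: F_def)
      ultimately show ?thesis using nn[of z] unfolding F_def by linarith
    qed
  qed
  have uniq: "q = p" if q: "\<forall>z. F q \<le> F z" for q
  proof (rule ccontr)
    assume ne: "q \<noteq> p"
    define c where "c = (1/2) *\<^sub>R p + (1/2) *\<^sub>R q"
    have Fpq: "F p = F q" using q ex by (meson order_antisym)
    have "U ((1 - 1/2) *\<^sub>R p + (1/2) *\<^sub>R q) \<le> (1 - 1/2) * U p + (1/2) * U q"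
      by (rule convex_onD[OF cvx]) auto
    then have Uc: "U c \<le> (U p + U q) / 2" by (simp add: c_def)
    have xx: "x = (1/2) *\<^sub>R x + (1/2) *\<^sub>R x" by (simp flip: scaleR_add_left)
    have "x - c = (1/2) *\<^sub>R (x - p) + (1/2) *\<^sub>R (x - q)"
      by (subst xx) (simp add: c_def algebra_simps)
    then have "(norm (x - c))^2 = ((norm (x - p))^2 + (norm (x - q))^2) / 2 - (norm ((x - q) - (x - p)))^2 / 4"
      using para[of "x - p" "x - q"] by simp
    then have "(norm (x - c))^2 = ((norm (x - p))^2 + (norm (x - q))^2) / 2 - (norm (p - q))^2 / 4"
      by simp
    moreover have "(norm (p - q))^2 > 0" using ne by simp
    ultimately have "(norm (x - c))^2 < ((norm (x - p))^2 + (norm (x - q))^2) / 2" by linarith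
    then have "(norm (x - c))^2 / (2*lam) < ((norm (x - p))^2 + (norm (x - q))^2) / 2 / (2*lam)"
      using lam by (intro divide_strict_right_mono) auto
    moreover have "((norm (x - p))^2 + (norm (x - q))^2) / 2 / (2*lam) = ((norm (x - p))^2/(2*lam) + (norm (x - q))^2/(2*lam)) / 2"
      by (simp add: add_divide_distrib)
    ultimately have "F c < (F p + F q) / 2" using Uc unfolding F_def by argo
    then have "F c < F q" using Fpq by simp
    with q show False by (simp add: not_le[symmetric])
  qed
  have "prox lam U x = p"
    unfolding prox_def F_def[symmetric]
  proof (rule the_equality)
    show "\<forall>z. F p \<le> F z" by (rule ex)
  next
    fix q assume "\<forall>z. F q \<le> F z" then show "q = p" by (rule uniq)
  qed
  then show ?thesis using ex unfolding F_def by simp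
qed

lemma prox_close:
  fixes U :: "'a::euclidean_space \<Rightarrow> real"
  assumes lam: "lam > 0" and lip: "M-lipschitz_on UNIV U"
    and pmin: "\<forall>z. U p + (norm (x - p))\<^sup>2 / (2 * lam) \<le> U z + (norm (x - z))\<^sup>2 / (2 * lam)"
  shows "norm (x - p) \<le> lam * M"
proof (rule ccontr)
  assume "\<not> ?thesis"
  then have big: "norm (x - p) > lam * M" by simp
  have M0: "M \<ge> 0" using lip by (rule lipschitz_on_nonneg)
  define r where "r = norm (x - p)"
  have "lam * M \<ge> 0" using lam M0 by simp
  then have r0: "r > 0" using big r_def by linarith
  define t where "t = min 1 ((r - lam * M) / r)"
  have t0: "0 < t" "t \<le> 1" using big r0 by (auto simp: t_def r_def)
  have "t \<le> (r - lam * M) / r" by (simp add: t_def)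
  then have "t * r \<le> (r - lam * M) / r * r" using r0 by (intro mult_right_mono) auto
  then have tlt: "t * r \<le> r - lam * M" using r0 by simp
  define z where "z = p + t *\<^sub>R (x - p)"
  have "U p + r^2 / (2 * lam) \<le> U z + (norm (x - z))\<^sup>2 / (2 * lam)" using pmin r_def by simp
  moreover have "x - z = (1 - t) *\<^sub>R (x - p)" by (simp add: z_def algebra_simps)
  then have "(norm (x - z))^2 = (1 - t)^2 * r^2" using t0 by (simp add: r_def power_mult_distrib)
  moreover have "U z \<le> U p + M * (t * r)"
  proof -
    have "norm (U z - U p) \<le> M * norm (z - p)" by (rule lipschitz_on_normD[OF lip]) auto
    moreover have "norm (z - p) = t * r" using t0 by (simp add: z_def r_def)
    ultimately show ?thesis by simp
  qed
  ultimately have "r^2 / (2 * lam) \<le> M * (t * r) + (1 - t)^2 * r^2 / (2 * lam)" by simp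
  then have "r^2 \<le> 2 * lam * M * t * r + (1 - t)^2 * r^2" using lam by (simp add: field_simps)
  then have "(2 * t - t^2) * r^2 \<le> 2 * lam * M * t * r" by (simp add: power2_eq_square algebra_simps)
  then have "((2 - t) * r) * (t * r) \<le> (2 * lam * M) * (t * r)" by (simp add: power2_eq_square algebra_simps)
  then have "(2 - t) * r \<le> 2 * lam * M" using t0 r0 by simp
  moreover have "t * r > 0" using t0 r0 by simp
  moreover have "(2 - t) * r = 2 * r - t * r" by (simp add: algebra_simps)
  ultimately show False using tlt by linarith
qed


lemma final_arith:
  fixes N P X R R1 D g gd gx m L \<gamma> \<gamma>bar \<delta> \<kappa> M :: real
  assumes mp: "m > 0" and Lm: "L \<ge> m" and gbar: "\<gamma>bar < 2 / (m + L)" and g0: "0 < \<gamma>" "\<gamma> \<le> \<gamma>bar"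
    and N: "N = P^2 - 2*\<gamma>*(gd + gx) + \<gamma>^2 * g^2"
    and main: "g^2 + m*L*D^2 \<le> (L+m) * gd"
    and gx: "\<bar>gx\<bar> \<le> g * R" and g: "g \<ge> 0" and R: "0 \<le> R" "R \<le> R1"
    and D: "P \<le> D + R" "0 \<le> D"
    and P: "P \<le> X + \<delta>" "0 \<le> P" "0 \<le> X"
    and \<delta>: "\<delta> = \<gamma> * \<kappa> * M" "0 \<le> \<delta>"
  shows "N \<le> (1 - \<gamma> * (m * L / (m + L)) / 2) * X^2
             + \<gamma> * (\<gamma>bar * \<kappa>^2 * M^2 + (inverse (2 / (m + L) - \<gamma>bar) + 4 * (m * L / (m + L))) * R1^2
                     + 2 * \<kappa>^2 * M^2 * inverse (m * L / (m + L)))"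
proof -
  define w where "w = m * L / (m + L)"
  define c where "c = 2 / (m + L) - \<gamma>bar"
  have mL: "m + L > 0" using mp Lm by simp
  have w0: "w > 0" using mp Lm unfolding w_def by simp
  have c0: "c > 0" using gbar unfolding c_def by simp
  have gd: "gd \<ge> g^2 / (m+L) + w * D^2"
  proof -
    have "(g^2 + m*L*D^2) / (m+L) \<le> gd" using main mL by (simp add: divide_le_eq algebra_simps)
    then show ?thesis unfolding w_def by (simp add: add_divide_distrib)
  qed
  have "2*\<gamma>*(g^2/(m+L) + w*D^2) \<le> 2*\<gamma>*gd" using gd g0 by (intro mult_left_mono) auto
  then have s1: "-2*\<gamma>*gd \<le> -2*\<gamma>*(g^2/(m+L)) - 2*\<gamma>*w*D^2"
    by (simp add: distrib_left)
  have s2: "\<gamma>^2 * g^2 \<le> \<gamma>*\<gamma>bar*g^2" using g0 by (simp add: power2_eq_square mult_right_mono)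
  have s3: "-2*\<gamma>*gx \<le> 2*\<gamma>*g*R"
  proof -
    have "-gx \<le> g*R" using gx by linarith
    then have "2*\<gamma>*(-gx) \<le> 2*\<gamma>*(g*R)" using g0 by (intro mult_left_mono) auto
    then show ?thesis by simp
  qed
  have s4: "-2*\<gamma>*(g^2/(m+L)) + \<gamma>*\<gamma>bar*g^2 = -\<gamma>*c*g^2" unfolding c_def by (simp add: algebra_simps)
  have s5: "-\<gamma>*c*g^2 + 2*\<gamma>*g*R \<le> \<gamma>*R^2/c"
  proof -
    have "0 \<le> (c*g - R)^2" by simp
    then have "c*(c*g^2 - 2*g*R) + R^2 \<ge> 0" by (simp add: power2_eq_square algebra_simps)
    then have "-(c*g^2) + 2*g*R \<le> R^2/c" using c0 by (simp add: field_simps)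
    then have "\<gamma>*(-(c*g^2) + 2*g*R) \<le> \<gamma>*(R^2/c)" by (rule mult_left_mono) (use g0 in auto)
    then show ?thesis by (simp add: algebra_simps)
  qed
  have claim1: "N \<le> P^2 - 2*\<gamma>*w*D^2 + \<gamma>*R^2/c"
    using N s1 s2 s3 s4 s5 by (simp add: algebra_simps)
  have DP: "D^2 \<ge> P^2/2 - R^2"
  proof -
    have "P^2 \<le> (D+R)^2" using D P R by (intro power_mono) auto
    also have "\<dots> \<le> 2*D^2 + 2*R^2"
    proof -
      have "0 \<le> (D-R)^2" by simp
      moreover have "(D-R)^2 = D^2 - 2*D*R + R^2" by (simp add: power2_diff)
      moreover have "(D+R)^2 = D^2 + 2*D*R + R^2" by (simp add: power2_sum)
      ultimately show ?thesis by linarith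
    qed
    finally show ?thesis by simp
  qed
  have gw0: "\<gamma>*w > 0" using g0 w0 by simp
  have claim2: "N \<le> (1-\<gamma>*w)*P^2 + 2*\<gamma>*w*R^2 + \<gamma>*R^2/c"
  proof -
    have "2*(\<gamma>*w)*(P^2/2 - R^2) \<le> 2*(\<gamma>*w)*D^2" using DP gw0 by (intro mult_left_mono) auto
    then show ?thesis using claim1 by (simp add: algebra_simps)
  qed
  have gw1: "\<gamma>*w \<le> 1/2"
  proof -
    have "\<gamma>*w \<le> (2/(m+L))*w" using g0 gbar w0 by (intro mult_right_mono) auto
    also have "\<dots> = 2*m*L/(m+L)^2" unfolding w_def by (simp add: power2_eq_square)
    also have "\<dots> \<le> 1/2"
    proof -
      have "0 \<le> (m-L)^2" by simp
      then have "4*m*L \<le> (m+L)^2" by (simp add: power2_eq_square algebra_simps)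
      then show ?thesis using mL by (simp add: divide_le_eq)
    qed
    finally show ?thesis .
  qed
  have s6: "(1-\<gamma>*w)*P^2 \<le> (1-\<gamma>*w)*X^2 + 2*X*\<delta> + \<delta>^2"
  proof -
    have "P^2 \<le> (X+\<delta>)^2" using P \<delta> by (intro power_mono) auto
    then have "(1-\<gamma>*w)*P^2 \<le> (1-\<gamma>*w)*(X+\<delta>)^2" using gw1 by (intro mult_left_mono) auto
    also have "\<dots> = (1-\<gamma>*w)*X^2 + (1-\<gamma>*w)*(2*X*\<delta> + \<delta>^2)" by (simp add: power2_sum algebra_simps)
    also have "(1-\<gamma>*w)*(2*X*\<delta> + \<delta>^2) \<le> 1*(2*X*\<delta> + \<delta>^2)"
      using gw0 P \<delta> by (intro mult_right_mono) auto
    finally show ?thesis by simp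
  qed
  have s7: "2*X*\<delta> \<le> \<gamma>*w/2*X^2 + 2*\<gamma>*\<kappa>^2*M^2/w"
  proof -
    have "0 \<le> (\<gamma>*w*X - 2*\<delta>)^2" by simp
    then have "4*(\<gamma>*w)*X*\<delta> \<le> (\<gamma>*w)^2*X^2 + 4*\<delta>^2" by (simp add: power2_eq_square algebra_simps)
    then have "2*X*\<delta> \<le> ((\<gamma>*w)^2*X^2 + 4*\<delta>^2) / (2*(\<gamma>*w))" using gw0 by (simp add: le_divide_eq algebra_simps)
    also have "\<dots> = \<gamma>*w/2*X^2 + 2*\<gamma>*\<kappa>^2*M^2/w" using g0 w0 unfolding \<delta> by (simp add: power2_eq_square field_simps)
    finally show ?thesis .
  qed
  have s8: "\<delta>^2 \<le> \<gamma>*\<gamma>bar*\<kappa>^2*M^2"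
  proof -
    have "\<delta>^2 = \<gamma>*\<gamma>*(\<kappa>^2*M^2)" unfolding \<delta> by (simp add: power2_eq_square algebra_simps)
    also have "\<dots> \<le> \<gamma>*\<gamma>bar*(\<kappa>^2*M^2)" using g0 by (intro mult_right_mono mult_left_mono) auto
    finally show ?thesis by (simp add: algebra_simps)
  qed
  have s9: "R^2 \<le> R1^2" using R by (intro power_mono) auto
  have s10: "2*\<gamma>*w*R^2 \<le> 4*\<gamma>*w*R1^2"
  proof -
    have "2*(\<gamma>*w)*R^2 \<le> 2*(\<gamma>*w)*R1^2" using s9 gw0 by (intro mult_left_mono) auto
    moreover have "0 \<le> (\<gamma>*w)*R1^2" using gw0 by simp
    ultimately show ?thesis by (simp add: algebra_simps)
  qed
  have s11: "\<gamma>*R^2/c \<le> \<gamma>*R1^2/c" using s9 c0 g0 by (intro divide_right_mono mult_left_mono) auto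
  have "N \<le> (1 - \<gamma>*w/2)*X^2 + \<gamma>*(\<gamma>bar*\<kappa>^2*M^2 + (1/c + 4*w)*R1^2 + 2*\<kappa>^2*M^2/w)"
    using claim2 s6 s7 s8 s10 s11 by (simp add: algebra_simps)
  then show ?thesis unfolding w_def[symmetric] c_def[symmetric] by (simp add: inverse_eq_divide)
qed

theorem lemma13:
  fixes \<Theta> :: "'b set"
    and V Vb U Ub :: "'b \<Rightarrow> 'a::euclidean_space \<Rightarrow> real"
    and gradV gradVb :: "'b \<Rightarrow> 'a \<Rightarrow> 'a"
    and L M m RV1 RV2 RU1 RU2 \<kappa> \<gamma> \<gamma>bar :: real and \<theta> :: 'b and x :: 'a
  assumes Theta_ne: "\<Theta> \<noteq> {}"
    (* H1: convexity and nonnegativity *)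
    and convex: "\<And>\<theta>. \<theta> \<in> \<Theta> \<Longrightarrow> convex_on UNIV (V \<theta>) \<and> convex_on UNIV (Vb \<theta>)
                       \<and> convex_on UNIV (U \<theta>) \<and> convex_on UNIV (Ub \<theta>)"
    and nonneg: "\<And>\<theta> x. \<theta> \<in> \<Theta> \<Longrightarrow> 0 \<le> V \<theta> x \<and> 0 \<le> Vb \<theta> x \<and> 0 \<le> U \<theta> x \<and> 0 \<le> Ub \<theta> x"
    (* H1 (a) *)
    and integrable: "\<And>\<theta>. \<theta> \<in> \<Theta> \<Longrightarrow>
          (\<lambda>x. exp (- V \<theta> x - U \<theta> x)) integrable_on UNIV \<and>
          (\<lambda>x. exp (- Vb \<theta> x - Ub \<theta> x)) integrable_on UNIV"
    and int_lower: "min (INF \<theta>\<in>\<Theta>. integral UNIV (\<lambda>x. exp (- V \<theta> x - U \<theta> x)))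
                        (INF \<theta>\<in>\<Theta>. integral UNIV (\<lambda>x. exp (- Vb \<theta> x - Ub \<theta> x))) > 0"
    (* H1 (b) *)
    and gradV: "\<And>\<theta> x. \<theta> \<in> \<Theta> \<Longrightarrow> (V \<theta> has_derivative (\<lambda>h. gradV \<theta> x \<bullet> h)) (at x)"
    and gradVb: "\<And>\<theta> x. \<theta> \<in> \<Theta> \<Longrightarrow> (Vb \<theta> has_derivative (\<lambda>h. gradVb \<theta> x \<bullet> h)) (at x)"
    and gradV_lip: "\<And>\<theta> x y. \<theta> \<in> \<Theta> \<Longrightarrow> norm (gradV \<theta> x - gradV \<theta> y) \<le> L * norm (x - y)"
    and gradVb_lip: "\<And>\<theta> x y. \<theta> \<in> \<Theta> \<Longrightarrow> norm (gradVb \<theta> x - gradVb \<theta> y) \<le> L * norm (x - y)"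
    and minV: "\<And>\<theta>. \<theta> \<in> \<Theta> \<Longrightarrow> \<exists>xs. (\<forall>y. V \<theta> xs \<le> V \<theta> y) \<and> norm xs \<le> RV1 \<and> \<bar>V \<theta> xs\<bar> \<le> RV2"
    and minVb: "\<And>\<theta>. \<theta> \<in> \<Theta> \<Longrightarrow> \<exists>xs. (\<forall>y. Vb \<theta> xs \<le> Vb \<theta> y) \<and> norm xs \<le> RV1 \<and> \<bar>Vb \<theta> xs\<bar> \<le> RV2"
    (* H1 (c) *)
    and U_lip: "\<And>\<theta>. \<theta> \<in> \<Theta> \<Longrightarrow> M-lipschitz_on UNIV (U \<theta>) \<and> M-lipschitz_on UNIV (Ub \<theta>)"
    and U_pt: "\<And>\<theta>. \<theta> \<in> \<Theta> \<Longrightarrow> \<exists>p. norm p \<le> RU1 \<and> \<bar>U \<theta> p\<bar> \<le> RU2"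
    and Ub_pt: "\<And>\<theta>. \<theta> \<in> \<Theta> \<Longrightarrow> \<exists>p. norm p \<le> RU1 \<and> \<bar>Ub \<theta> p\<bar> \<le> RU2"
    (* H2 *)
    and m_pos: "m > 0"
    and strong: "\<And>\<theta>. \<theta> \<in> \<Theta> \<Longrightarrow> m_convex m (V \<theta>) \<and> m_convex m (Vb \<theta>)"
    (* parameters of the lemma *)
    and kappa: "\<kappa> > 0"
    and theta: "\<theta> \<in> \<Theta>"
    and gbar: "\<gamma>bar < 2 / (m + L)"
    and gamma: "0 < \<gamma>" "\<gamma> \<le> \<gamma>bar"
  shows "let w = m * L / (m + L); p = prox (\<gamma> * \<kappa>) (U \<theta>) x in
         (norm (p - \<gamma> *\<^sub>R gradV \<theta> p))\<^sup>2
           \<le> (1 - \<gamma> * w / 2) * (norm x)\<^sup>2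
             + \<gamma> * (\<gamma>bar * \<kappa>\<^sup>2 * M\<^sup>2 + (inverse (2 / (m + L) - \<gamma>bar) + 4 * w) * RV1\<^sup>2
                     + 2 * \<kappa>\<^sup>2 * M\<^sup>2 * inverse w)"
proof -
  define lam where "lam = \<gamma> * \<kappa>"
  define p where "p = prox lam (U \<theta>) x"
  define G where "G = gradV \<theta>"
  define f where "f = V \<theta>"
  have lam0: "lam > 0" using gamma kappa by (simp add: lam_def)
  have derV: "\<And>x. (f has_derivative (\<lambda>h. G x \<bullet> h)) (at x)"
    using gradV[OF theta] by (simp add: f_def G_def)
  have lipG: "\<And>x y. norm (G x - G y) \<le> L * norm (x - y)"
    using gradV_lip[OF theta] by (simp add: G_def)
  have mcV: "m_convex m f" using strong[OF theta] by (simp add: f_def)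
  obtain xs where xsmin: "\<forall>y. f xs \<le> f y" and xsR: "norm xs \<le> RV1"
    using minV[OF theta] unfolding f_def by blast
  have up: "\<And>y z. f z \<le> f y + G y \<bullet> (z - y) + L / 2 * (norm (z - y))\<^sup>2"
    by (rule descent[OF derV lipG])
  have low: "\<And>y z. f y + G y \<bullet> (z - y) + m / 2 * (norm (z - y))\<^sup>2 \<le> f z"
    by (rule strong_grad[OF derV mcV])
  have Lm: "L \<ge> m"
  proof -
    obtain b :: 'a where b: "b \<in> Basis" using nonempty_Basis by blast
    then have nb: "norm b = 1" by simp
    have "f 0 + G 0 \<bullet> (b - 0) + m / 2 * (norm (b - 0))\<^sup>2 \<le> f 0 + G 0 \<bullet> (b - 0) + L / 2 * (norm (b - 0))\<^sup>2"
      using low[where y=0 and z=b] up[where y=0 and z=b] by linarith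
    then show ?thesis using nb by simp
  qed
  have Lpos: "L > 0" using Lm m_pos by simp
  have Gxs: "G xs = 0"
  proof (rule ccontr)
    assume ne: "G xs \<noteq> 0"
    define s where "s = 1 / L"
    have s0: "s > 0" using Lpos by (simp add: s_def)
    define z where "z = xs - s *\<^sub>R G xs"
    have q2: "G xs \<bullet> (z - xs) = - s * (norm (G xs))^2"
      by (simp add: z_def power2_norm_eq_inner)
    have q3: "(norm (z - xs))\<^sup>2 = s^2 * (norm (G xs))^2"
      using s0 by (simp add: z_def power_mult_distrib)
    have "f z \<le> f xs + - s * (norm (G xs))^2 + L / 2 * (s^2 * (norm (G xs))^2)"
      using up[where y=xs and z=z] unfolding q2 q3 .
    moreover have "f xs \<le> f z" using xsmin by simp
    ultimately have "0 \<le> - s * (norm (G xs))^2 + L / 2 * (s^2 * (norm (G xs))^2)" by linarith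
    moreover have "L / 2 * (s^2 * (norm (G xs))^2) = s/2 * (norm (G xs))^2"
    proof -
      have Ls: "L * s^2 = s" using Lpos by (simp add: s_def power2_eq_square)
      have "L / 2 * (s^2 * (norm (G xs))^2) = (L * s^2) / 2 * (norm (G xs))^2" by (simp add: algebra_simps)
      then show ?thesis using Ls by simp
    qed
    ultimately have "0 \<le> - s/2 * (norm (G xs))^2" by linarith
    moreover have "(norm (G xs))^2 > 0" using ne by simp
    ultimately show False using s0 by (simp add: mult_le_0_iff)
  qed
  define \<phi> where "\<phi> z = f z - m/2 * (norm z)^2" for z
  define G\<phi> where "G\<phi> z = G z - m *\<^sub>R z" for z
  have sq: "(norm (z - y))^2 = (norm z)^2 - 2 * (y \<bullet> z) + (norm y)^2" for y z :: 'a
    by (simp add: power2_norm_eq_inner inner_diff_left inner_diff_right inner_commute)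
  have lin: "(m *\<^sub>R y) \<bullet> (z - y) = m * (y \<bullet> z) - m * (norm y)^2" for y z :: 'a
    by (simp add: power2_norm_eq_inner inner_diff_right algebra_simps)
  have lowphi: "\<phi> y + G\<phi> y \<bullet> (z - y) \<le> \<phi> z" for y z
  proof -
    have "f y + G y \<bullet> (z - y) + m / 2 * ((norm z)^2 - 2 * (y \<bullet> z) + (norm y)^2) \<le> f z"
      using low[of y z] sq[of z y] by simp
    then show ?thesis unfolding \<phi>_def G\<phi>_def inner_diff_left lin by (simp add: algebra_simps)
  qed
  have upphi: "\<phi> z \<le> \<phi> y + G\<phi> y \<bullet> (z - y) + (L - m)/2 * (norm (z - y))^2" for y z
  proof -
    have "f z \<le> f y + G y \<bullet> (z - y) + L / 2 * ((norm z)^2 - 2 * (y \<bullet> z) + (norm y)^2)"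
      using up[of z y] sq[of z y] by simp
    then show ?thesis unfolding \<phi>_def G\<phi>_def inner_diff_left lin sq by (simp add: field_simps)
  qed
  define g where "g = G p"
  define d where "d = p - xs"
  have coco: "(norm (G\<phi> p - G\<phi> xs))^2 \<le> (L - m) * ((G\<phi> p - G\<phi> xs) \<bullet> (p - xs))"
    by (rule cocoercive[OF lowphi upphi])
  have hd: "G\<phi> p - G\<phi> xs = g - m *\<^sub>R d" by (simp add: G\<phi>_def Gxs g_def d_def algebra_simps)
  have e1: "(norm (g - m *\<^sub>R d))^2 = (norm g)^2 - 2*m*(g \<bullet> d) + m^2 * (norm d)^2"
    unfolding power2_norm_eq_inner by (simp add: inner_diff_left inner_diff_right inner_commute power2_eq_square algebra_simps)
  have e2: "(g - m *\<^sub>R d) \<bullet> d = g \<bullet> d - m * (norm d)^2"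
    by (simp add: power2_norm_eq_inner inner_diff_left)
  have main: "(norm g)^2 + m*L*(norm d)^2 \<le> (L+m) * (g \<bullet> d)"
    using coco unfolding hd d_def[symmetric] e1 e2 by (simp add: algebra_simps power2_eq_square)
  have pmin: "\<forall>z. U \<theta> p + (norm (x - p))\<^sup>2 / (2 * lam) \<le> U \<theta> z + (norm (x - z))\<^sup>2 / (2 * lam)"
    unfolding p_def
    by (rule prox_min[OF lam0]) (use convex[OF theta] nonneg[OF theta] U_lip[OF theta] in auto)
  have pclose: "norm (x - p) \<le> lam * M"
    by (rule prox_close[OF lam0 _ pmin]) (use U_lip[OF theta] in auto)
  have M0: "M \<ge> 0" using U_lip[OF theta] lipschitz_on_nonneg by blast
  have N: "(norm (p - \<gamma> *\<^sub>R g))^2 = (norm p)^2 - 2*\<gamma>*(g \<bullet> d + g \<bullet> xs) + \<gamma>^2 * (norm g)^2"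
    unfolding power2_norm_eq_inner by (simp add: d_def inner_diff_left inner_diff_right inner_commute power2_eq_square algebra_simps)
  have gx: "\<bar>g \<bullet> xs\<bar> \<le> norm g * norm xs" by (rule Cauchy_Schwarz_ineq2)
  have PD: "norm p \<le> norm d + norm xs" unfolding d_def by (metis diff_add_cancel norm_triangle_ineq)
  have PX: "norm p \<le> norm x + lam * M"
  proof -
    have "norm p \<le> norm x + norm (p - x)" by (metis add_diff_cancel_left' norm_triangle_ineq diff_add_cancel add.commute)
    then show ?thesis using pclose by (simp add: norm_minus_commute)
  qed
  have "(norm (p - \<gamma> *\<^sub>R g))^2 \<le> (1 - \<gamma> * (m * L / (m + L)) / 2) * (norm x)^2
             + \<gamma> * (\<gamma>bar * \<kappa>^2 * M^2 + (inverse (2 / (m + L) - \<gamma>bar) + 4 * (m * L / (m + L))) * RV1^2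
                     + 2 * \<kappa>^2 * M^2 * inverse (m * L / (m + L)))"
    by (rule final_arith[OF m_pos Lm gbar gamma N main gx _ _ xsR PD _ PX _ _ _ _])
       (use lam0 M0 kappa gamma in \<open>auto simp: lam_def\<close>)
  then show ?thesis unfolding Let_def p_def g_def G_def lam_def by simp
qed

end
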